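(* Let $(\Omega,\mathcal F)$ be a measurable space with $\Sigma\neq\emptyset$ (where $\Sigma$ is defined in the context). Let $v:\mathcal F\to\mathbb R$ be a non-decreasing and continuous set function with $v(\emptyset)=0$. Then the following four conditions are equivalent. (a) $v$ is submodular, i.e. $v(A)+v(B)\ge v(A\cup B)+v(A\cap B)$ for all $A,B\in\mathcal F$. (b) For every $\mathcal I\in\Sigma$, the extremal measure $\mu_{v,\mathcal I}$ belongs to $\mathcal C_{-,v}(\Omega)$. (c) $v(A)=\sup_{\mathcal I\in\Sigma}\mu_{v,\mathcal I}(A)$ for all $A\in\mathcal F$. (d) For all $A,B\in\mathcal F$ with $B\subset A$, $v(B)=\sup_{\mu\in\mathcal C_{-,v}(A)}\mu(B)$.
   Context: Let $(\Omega,\mathcal F)$ be a measurable space. $\Sigma$ denotes the set of all classes $\mathcal I\subset\mathcal F$ that are chains (totally ordered by inclusion), contain $\emptyset$ and $\Omega$, and satisfy $\sigma[\mathcal I]=\mathcal F$ (the smallest $\sigma$-algebra containing $\mathcal I$ is $\mathcal F$). A set function $v:\mathcal F\to\mathbb R$ is non-decreasing if $v(A)\le v(B)$ whenever $A\subset B$. For $\mathcal I\in\Sigma$, let $\mathcal J$ be the algebra generated by $\mathcal I$; its elements are exactly the sets $\bigcup_{i=1}^n (C_i\cap D_i^c)$ with $C_1\supset D_1\supset C_2\supset\cdots\supset C_n\supset D_n$, $C_i,D_i\in\mathcal I$. For non-decreasing $v$ define the finitely additive set function $\mu_{v,\mathcal I}$ on $\mathcal J$ by $\mu_{v,\mathcal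 I}(\bigcup_{i=1}^n (C_i\cap D_i^c))=\sum_{i=1}^n (v(C_i)-v(D_i))$ (the unique finitely additive extension of $\mu_{v,\mathcal I}(I)=v(I)$, $I\in\mathcal I$). A non-decreasing $v$ is called continuous if for every $\mathcal I\in\Sigma$ this $\mu_{v,\mathcal I}$ is $\sigma$-additive on $\mathcal J$; then it extends uniquely to a measure on $\mathcal F$, again denoted $\mu_{v,\mathcal I}$ and called the extremal measure of $v$ corresponding to $\mathcal I$. For $A\in\mathcal F$, $\mathcal M(A)$ is the set of finite measures on $(A,\mathcal F|_A)$, and $\mathcal C_{-,v}(A)=\{\mu\in\mathcal M(A)\mid \mu(A)=v(A),\ \mu(B)\le v(B)\text{ for all }B\in\mathcal F,\ B\subset A\}$. *)

theory Defs
  imports "HOL-Analysis.Analysis"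
begin

definition Sigma_chains :: "'a measure \<Rightarrow> 'a set set set" where
  "Sigma_chains M = {I. I \<subseteq> sets M \<and>
     (\<forall>C\<in>I. \<forall>D\<in>I. C \<subseteq> D \<or> D \<subseteq> C) \<and>
     {} \<in> I \<and> space M \<in> I \<and> sigma_sets (space M) I = sets M}"

definition nondecreasing_sf :: "'a measure \<Rightarrow> ('a set \<Rightarrow> real) \<Rightarrow> bool" where
  "nondecreasing_sf M v \<longleftrightarrow> (\<forall>A\<in>sets M. \<forall>B\<in>sets M. A \<subseteq> B \<longrightarrow> v A \<le> v B)"

definition submodular_sf :: "'a measure \<Rightarrow> ('a set \<Rightarrow> real) \<Rightarrow> bool" where
  "submodular_sf M v \<longleftrightarrow>
     (\<forall>A\<in>sets M. \<forall>B\<in>sets M. v A + v B \<ge> v (A \<union> B) + v (A \<inter> B))"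

definition chain_rep :: "'a set set \<Rightarrow> nat \<Rightarrow> (nat \<Rightarrow> 'a set) \<Rightarrow> (nat \<Rightarrow> 'a set) \<Rightarrow> bool" where
  "chain_rep I n C D \<longleftrightarrow> (\<forall>i<n. C i \<in> I \<and> D i \<in> I \<and> D i \<subseteq> C i \<and>
                                (Suc i < n \<longrightarrow> C (Suc i) \<subseteq> D i))"

definition chain_algebra :: "'a set set \<Rightarrow> 'a set set" where
  "chain_algebra I = {(\<Union>i<n. C i \<inter> - D i) | n C D. chain_rep I n C D}"

definition mu_J :: "('a set \<Rightarrow> real) \<Rightarrow> 'a set set \<Rightarrow> 'a set \<Rightarrow> real" where
  "mu_J v I A = (SOME s. \<exists>n C D. chain_rep I n C D \<and> A = (\<Union>i<n. C i \<inter> - D i)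
                              \<and> s = (\<Sum>i<n. v (C i) - v (D i)))"

definition continuous_sf :: "'a measure \<Rightarrow> ('a set \<Rightarrow> real) \<Rightarrow> bool" where
  "continuous_sf M v \<longleftrightarrow>
     (\<forall>I\<in>Sigma_chains M. countably_additive (chain_algebra I) (\<lambda>A. ennreal (mu_J v I A)))"

definition extremal_measure :: "'a measure \<Rightarrow> ('a set \<Rightarrow> real) \<Rightarrow> 'a set set \<Rightarrow> 'a measure" where
  "extremal_measure M v I = (THE N. sets N = sets M \<and>
      (\<forall>A\<in>chain_algebra I. emeasure N A = ennreal (mu_J v I A)))"

text \<open>C_{-,v}(A): finite measures on (A, F|_A) dominated by v with total mass v(A).\<close>
definition lower_core :: "'a measure \<Rightarrow> ('a set \<Rightarrow> real) \<Rightarrow> 'a set \<Rightarrow> 'a measure set" where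
  "lower_core M v A = {N. finite_measure N \<and> sets N = sets (restrict_space M A) \<and>
      measure N A = v A \<and> (\<forall>B\<in>sets M. B \<subseteq> A \<longrightarrow> measure N B \<le> v B)}"

end

theory Submission
  imports Defs
begin

definition is_chain :: "'a set set \<Rightarrow> bool" where
  "is_chain I \<longleftrightarrow> (\<forall>C\<in>I. \<forall>D\<in>I. C \<subseteq> D \<or> D \<subseteq> C)"

lemma chain_Int: "is_chain I \<Longrightarrow> A \<in> I \<Longrightarrow> B \<in> I \<Longrightarrow> A \<inter> B \<in> I"
  unfolding is_chain_def by (metis Int_absorb1 Int_absorb2)

lemma chain_Un: "is_chain I \<Longrightarrow> A \<in> I \<Longrightarrow> B \<in> I \<Longrightarrow> A \<union> B \<in> I"
  unfolding is_chain_def by (metis Un_absorb1 Un_absorb2)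

lemma chain_rep_nest:
  assumes "chain_rep I n C D" "i < j" "j < n"
  shows "C j \<subseteq> D i"
  using assms(2,3)
proof (induction j)
  case 0 then show ?case by simp
next
  case (Suc k)
  have a: "C (Suc k) \<subseteq> D k" "D k \<subseteq> C k" using assms(1) Suc.prems unfolding chain_rep_def by auto
  show ?case
  proof (cases "i = k")
    case True then show ?thesis using a by simp
  next
    case False
    then have "C k \<subseteq> D i" using Suc by simp
    then show ?thesis using a by blast
  qed
qed

lemma chain_rep_Suc: "chain_rep I (Suc m) C D \<Longrightarrow> chain_rep I m C D"
  unfolding chain_rep_def by auto

lemma rep_interval_sum:
  fixes v :: "'a set \<Rightarrow> real"
  assumes ch: "is_chain I"
  shows "chain_rep I n C D \<Longrightarrow> c \<in> I \<Longrightarrow> d \<in> I \<Longrightarrow> d \<subseteq> c \<Longrightarrow>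
     (\<Union>i<n. C i \<inter> - D i) = c \<inter> - d \<Longrightarrow> (\<Sum>i<n. v (C i) - v (D i)) = v c - v d"
proof (induction n arbitrary: c d)
  case 0
  then have "c = d" by auto
  then show ?case by simp
next
  case (Suc m)
  have rm: "chain_rep I m C D" using Suc.prems(1) by (rule chain_rep_Suc)
  have CmI: "C m \<in> I" "D m \<in> I" "D m \<subseteq> C m" using Suc.prems(1) unfolding chain_rep_def by auto
  have U: "(\<Union>i<Suc m. C i \<inter> - D i) = (\<Union>i<m. C i \<inter> - D i) \<union> (C m \<inter> - D m)"
    by (simp add: lessThan_Suc Un_commute)
  show ?case
  proof (cases "C m \<subseteq> D m")
    case True
    then have "C m = D m" using CmI by blast
    then have "(\<Union>i<m. C i \<inter> - D i) = c \<inter> - d" using Suc.prems(5) U by auto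
    then have "(\<Sum>i<m. v (C i) - v (D i)) = v c - v d" using Suc.IH[OF rm Suc.prems(2-4)] by simp
    then show ?thesis using \<open>C m = D m\<close> by simp
  next
    case False
    then obtain z where z: "z \<in> C m" "z \<notin> D m" by blast
    have disj: "(\<Union>i<m. C i \<inter> - D i) \<inter> C m = {}"
      using chain_rep_nest[OF Suc.prems(1), of _ m] by auto
    have zX: "z \<in> c" "z \<notin> d" using z Suc.prems(5) U by auto
    have Cmc: "C m \<subseteq> c"
    proof (rule ccontr)
      assume "\<not> C m \<subseteq> c"
      then obtain y where y: "y \<in> C m" "y \<notin> c" by blast
      then have "y \<in> D m" using Suc.prems(5) U by auto
      then have "\<not> D m \<subseteq> c" using y by blast
      then have "c \<subseteq> D m" using ch Suc.prems(2) CmI unfolding is_chain_def by blast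
      then show False using zX z by blast
    qed
    have dC: "d \<subseteq> C m"
      using ch Suc.prems(3) CmI z zX unfolding is_chain_def by blast
    have Dd: "D m = d"
    proof -
      have "d \<subseteq> D m"
      proof
        fix y assume "y \<in> d"
        then have "y \<in> C m" using dC by blast
        show "y \<in> D m"
        proof (rule ccontr)
          assume "y \<notin> D m"
          then have "y \<in> c \<inter> - d" using Suc.prems(5) U \<open>y \<in> C m\<close> by blast
          then show False using \<open>y \<in> d\<close> by blast
        qed
      qed
      moreover have "D m \<subseteq> d"
      proof
        fix y assume "y \<in> D m"
        then have "y \<in> c" using CmI Cmc by blast
        show "y \<in> d"
        proof (rule ccontr)
          assume "y \<notin> d"
          then have "y \<in> (\<Union>i<Suc m. C i \<inter> - D i)" using Suc.prems(5) \<open>y \<in> c\<close> by blast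
          then show False using U disj \<open>y \<in> D m\<close> CmI by blast
        qed
      qed
      ultimately show ?thesis by blast
    qed
    have "(\<Union>i<m. C i \<inter> - D i) = c \<inter> - C m"
    proof -
      have "(\<Union>i<m. C i \<inter> - D i) = (\<Union>i<Suc m. C i \<inter> - D i) - C m"
        using U disj by blast
      also have "\<dots> = c \<inter> - C m" using Suc.prems(5) dC by blast
      finally show ?thesis .
    qed
    then have "(\<Sum>i<m. v (C i) - v (D i)) = v c - v (C m)"
      using Suc.IH[OF rm Suc.prems(2) CmI(1) Cmc] by simp
    then show ?thesis using Dd by simp
  qed
qed

lemma mu_J_interval:
  fixes v :: "'a set \<Rightarrow> real"
  assumes ch: "is_chain I" and "c \<in> I" "d \<in> I" "d \<subseteq> c"
  shows "mu_J v I (c \<inter> - d) = v c - v d"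
proof -
  let ?P = "\<lambda>s. \<exists>n C D. chain_rep I n C D \<and> c \<inter> - d = (\<Union>i<n. C i \<inter> - D i)
                              \<and> s = (\<Sum>i<n. v (C i) - v (D i))"
  have "?P (v c - v d)"
    by (rule exI[of _ 1], rule exI[of _ "\<lambda>_. c"], rule exI[of _ "\<lambda>_. d"])
       (use assms in \<open>auto simp: chain_rep_def\<close>)
  then have "?P (mu_J v I (c \<inter> - d))" unfolding mu_J_def by (rule someI)
  then show ?thesis using rep_interval_sum[OF ch, of _ _ _ c d v] assms by metis
qed

lemma Sigma_chainsD:
  assumes "I \<in> Sigma_chains M"
  shows "I \<subseteq> sets M" "is_chain I" "{} \<in> I" "space M \<in> I" "sigma_sets (space M) I = sets M"
  using assms unfolding Sigma_chains_def is_chain_def by auto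

definition ivs :: "'a set set \<Rightarrow> 'a set set" where
  "ivs I = {A - B | A B. A \<in> I \<and> B \<in> I}"

lemma ivs_semiring:
  assumes "I \<in> Sigma_chains M"
  shows "semiring_of_sets (space M) (ivs I)"
proof -
  note I = Sigma_chainsD[OF assms]
  show ?thesis
  proof
    show "ivs I \<subseteq> Pow (space M)" using I(1) sets.sets_into_space unfolding ivs_def by blast
    show "{} \<in> ivs I" using I(3) unfolding ivs_def by blast
  next
    fix a b assume "a \<in> ivs I" "b \<in> ivs I"
    then obtain A1 B1 A2 B2 where ab: "a = A1 - B1" "b = A2 - B2" "A1 \<in> I" "B1 \<in> I" "A2 \<in> I" "B2 \<in> I"
      unfolding ivs_def by blast
    have "a \<inter> b = (A1 \<inter> A2) - (B1 \<union> B2)" using ab by blast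
    moreover have "A1 \<inter> A2 \<in> I" "B1 \<union> B2 \<in> I" using ab chain_Int[OF I(2)] chain_Un[OF I(2)] by auto
    ultimately show "a \<inter> b \<in> ivs I" unfolding ivs_def by blast
    let ?C = "{A1 - (B1 \<union> A2), (A1 \<inter> (A2 \<inter> B2)) - B1}"
    have "B1 \<union> A2 \<in> I" "A1 \<inter> (A2 \<inter> B2) \<in> I" using ab chain_Int[OF I(2)] chain_Un[OF I(2)] by auto
    then have "?C \<subseteq> ivs I" unfolding ivs_def using ab by blast
    moreover have "a - b = \<Union>?C" using ab by blast
    moreover have "disjoint ?C" unfolding disjoint_def by blast
    ultimately show "\<exists>C\<subseteq>ivs I. finite C \<and> disjoint C \<and> a - b = \<Union> C" by blast
  qed
qed

lemma I_sub_ivs: "{} \<in> I \<Longrightarrow> I \<subseteq> ivs I"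
proof
  fix C assume "{} \<in> I" "C \<in> I"
  moreover have "C = C - {}" by simp
  ultimately show "C \<in> ivs I" unfolding ivs_def by blast
qed

lemma ivs_sets: "I \<subseteq> sets M \<Longrightarrow> ivs I \<subseteq> sets M"
proof
  fix X assume I: "I \<subseteq> sets M" and "X \<in> ivs I"
  then obtain A B where "X = A - B" "A \<in> I" "B \<in> I" unfolding ivs_def by blast
  moreover have "A \<in> sets M" "B \<in> sets M" using I calculation by auto
  ultimately show "X \<in> sets M" by auto
qed

lemma ivs_sigma:
  assumes "I \<in> Sigma_chains M"
  shows "sigma_sets (space M) (ivs I) = sets M"
proof
  note I = Sigma_chainsD[OF assms]
  show "sigma_sets (space M) (ivs I) \<subseteq> sets M"
    by (rule sets.sigma_sets_subset[OF ivs_sets[OF I(1)]])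
  have "sigma_sets (space M) I \<subseteq> sigma_sets (space M) (ivs I)"
    by (rule sigma_sets_mono'[OF I_sub_ivs[OF I(3)]])
  then show "sets M \<subseteq> sigma_sets (space M) (ivs I)" using I(5) by simp
qed

lemma chain_algebraI:
  "chain_rep I n C D \<Longrightarrow> X = (\<Union>i<n. C i \<inter> - D i) \<Longrightarrow> X \<in> chain_algebra I"
  unfolding chain_algebra_def by blast

lemma ivs_CA:
  assumes "is_chain I" shows "ivs I \<subseteq> chain_algebra I"
proof
  fix X assume "X \<in> ivs I"
  then obtain A B where X: "X = A - B" "A \<in> I" "B \<in> I" unfolding ivs_def by blast
  have "{..<(1::nat)} = {0}" by auto
  then have e: "X = (\<Union>i<(1::nat). (\<lambda>_. A) i \<inter> - (\<lambda>_. A \<inter> B) i)" using X by auto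
  have "A \<inter> B \<in> I" using chain_Int[OF assms X(2,3)] .
  then have "chain_rep I 1 (\<lambda>_. A) (\<lambda>_. A \<inter> B)"
    unfolding chain_rep_def using X by auto
  then show "X \<in> chain_algebra I" using e by (rule chain_algebraI)
qed

lemma mu_J_ivs:
  fixes v :: "'a set \<Rightarrow> real"
  assumes ch: "is_chain I" and "A \<in> I" "B \<in> I"
  shows "mu_J v I (A - B) = v A - v (A \<inter> B)"
proof -
  have "A - B = A \<inter> - (A \<inter> B)" by blast
  then show ?thesis using mu_J_interval[OF ch assms(2) chain_Int[OF ch assms(2,3)]] by simp
qed

lemma chain_algebra_rep:
  fixes v :: "'a set \<Rightarrow> real"
  assumes "A \<in> chain_algebra I"
  obtains n C D where "chain_rep I n C D" "A = (\<Union>i<n. C i \<inter> - D i)"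
    "mu_J v I A = (\<Sum>i<n. v (C i) - v (D i))"
proof -
  let ?P = "\<lambda>s. \<exists>n C D. chain_rep I n C D \<and> A = (\<Union>i<n. C i \<inter> - D i)
                              \<and> s = (\<Sum>i<n. v (C i) - v (D i))"
  have "\<exists>s. ?P s" using assms unfolding chain_algebra_def by blast
  then have "?P (mu_J v I A)" unfolding mu_J_def by (rule someI_ex)
  then show ?thesis using that by blast
qed

lemma ext_char:
  fixes v :: "'a set \<Rightarrow> real"
  assumes I: "I \<in> Sigma_chains M" and nd: "nondecreasing_sf M v" and ct: "continuous_sf M v"
  shows "sets (extremal_measure M v I) = sets M \<and>
     (\<forall>A\<in>chain_algebra I. emeasure (extremal_measure M v I) A = ennreal (mu_J v I A))"
proof -
  note Ip = Sigma_chainsD[OF I]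
  interpret semiring_of_sets "space M" "ivs I" by (rule ivs_semiring[OF I])
  define f where "f = (\<lambda>A. ennreal (mu_J v I A))"
  have "countably_additive (chain_algebra I) f" using ct I unfolding continuous_sf_def f_def by blast
  then have ca: "countably_additive (ivs I) f"
    using ivs_CA[OF Ip(2)] unfolding countably_additive_def by blast
  have "mu_J v I {} = 0" using mu_J_ivs[OF Ip(2) Ip(3) Ip(3), of v] by simp
  then have pos: "positive (ivs I) f" unfolding positive_def f_def by simp
  obtain \<mu> where mu: "\<forall>s\<in>ivs I. \<mu> s = f s" "measure_space (space M) (sigma_sets (space M) (ivs I)) \<mu>"
    using caratheodory[OF pos ca] by blast
  have ms: "measure_space (space M) (sets M) \<mu>" using mu(2) ivs_sigma[OF I] by simp
  define N where "N = measure_of (space M) (sets M) \<mu>"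
  have sN: "sets N = sets M" unfolding N_def by simp
  have eN: "emeasure N X = \<mu> X" if "X \<in> sets M" for X
    unfolding N_def using ms that by (intro emeasure_measure_of_sigma) (auto simp: measure_space_def)
  have nonneg: "0 \<le> v C - v D" if "C \<in> I" "D \<in> I" "D \<subseteq> C" for C D
    using nd that Ip(1) unfolding nondecreasing_sf_def by auto
  have PN: "\<forall>A\<in>chain_algebra I. emeasure N A = ennreal (mu_J v I A)"
  proof
    fix A assume "A \<in> chain_algebra I"
    then obtain n C D where r: "chain_rep I n C D" "A = (\<Union>i<n. C i \<inter> - D i)"
      "mu_J v I A = (\<Sum>i<n. v (C i) - v (D i))" by (rule chain_algebra_rep)
    have CD: "C i \<in> I" "D i \<in> I" "D i \<subseteq> C i" if "i < n" for i
      using r(1) that unfolding chain_rep_def by auto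
    have piv: "C i \<inter> - D i \<in> ivs I" if "i < n" for i
    proof -
      have "C i \<inter> - D i = C i - D i" by blast
      then show ?thesis unfolding ivs_def using CD[OF that] by blast
    qed
    have pS: "C i \<inter> - D i \<in> sets M" if "i < n" for i using piv[OF that] ivs_sets[OF Ip(1)] by blast
    have dj: "disjoint_family_on (\<lambda>i. C i \<inter> - D i) {..<n}"
      unfolding disjoint_family_on_def
    proof (intro ballI impI)
      fix i j assume "i \<in> {..<n}" "j \<in> {..<n}" "i \<noteq> j"
      then show "C i \<inter> - D i \<inter> (C j \<inter> - D j) = {}"
        using chain_rep_nest[OF r(1), of i j] chain_rep_nest[OF r(1), of j i] by (cases "i < j") auto
    qed
    have im: "(\<lambda>i. C i \<inter> - D i) ` {..<n} \<subseteq> sets N" using pS sN by auto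
    have "emeasure N A = (\<Sum>i<n. emeasure N (C i \<inter> - D i))"
      using sum_emeasure[OF im dj finite_lessThan] r(2) by simp
    also have "\<dots> = (\<Sum>i<n. ennreal (v (C i) - v (D i)))"
    proof (rule sum.cong[OF refl])
      fix i assume "i \<in> {..<n}"
      then have i: "i < n" by simp
      have "emeasure N (C i \<inter> - D i) = f (C i \<inter> - D i)" using eN[OF pS[OF i]] mu(1) piv[OF i] by simp
      also have "\<dots> = ennreal (v (C i) - v (D i))" unfolding f_def
        using mu_J_interval[OF Ip(2) CD[OF i]] by simp
      finally show "emeasure N (C i \<inter> - D i) = ennreal (v (C i) - v (D i))" .
    qed
    also have "\<dots> = ennreal (mu_J v I A)" using r(3) nonneg CD by (subst sum_ennreal) auto
    finally show "emeasure N A = ennreal (mu_J v I A)" .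
  qed
  have uniq: "N' = N" if "sets N' = sets M" "\<forall>A\<in>chain_algebra I. emeasure N' A = ennreal (mu_J v I A)" for N'
  proof (rule measure_eqI_generator_eq[where E = I and \<Omega> = "space M" and A = "\<lambda>_. space M"])
    show "Int_stable I" unfolding Int_stable_def using chain_Int[OF Ip(2)] by blast
    show "I \<subseteq> Pow (space M)" using Ip(1) sets.sets_into_space by blast
    fix X assume "X \<in> I"
    then have "X \<in> chain_algebra I" using ivs_CA[OF Ip(2)] I_sub_ivs[OF Ip(3)] by blast
    then show "emeasure N' X = emeasure N X" using that(2) PN by simp
  next
    show "sets N' = sigma_sets (space M) I" "sets N = sigma_sets (space M) I" using that(1) sN Ip(5) by auto
    show "range (\<lambda>_. space M) \<subseteq> I" using Ip(4) by blast
    show "(\<Union>i. space M) = space M" by simp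
    have "space M \<in> chain_algebra I" using ivs_CA[OF Ip(2)] I_sub_ivs[OF Ip(3)] Ip(4) by blast
    then show "\<And>i::nat. emeasure N' (space M) \<noteq> \<infinity>" using that(2) by simp
  qed
  have "extremal_measure M v I = N"
    unfolding extremal_measure_def
  proof (rule the_equality)
    show "sets N = sets M \<and> (\<forall>A\<in>chain_algebra I. emeasure N A = ennreal (mu_J v I A))"
      using sN PN by blast
    fix N' assume "sets N' = sets M \<and> (\<forall>A\<in>chain_algebra I. emeasure N' A = ennreal (mu_J v I A))"
    then show "N' = N" using uniq by blast
  qed
  then show ?thesis using sN PN by simp
qed

lemma ext_props:
  fixes v :: "'a set \<Rightarrow> real"
  assumes I: "I \<in> Sigma_chains M" and nd: "nondecreasing_sf M v" and ct: "continuous_sf M v"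
    and v0: "v {} = 0"
  shows "sets (extremal_measure M v I) = sets M" "space (extremal_measure M v I) = space M"
    "\<And>C. C \<in> I \<Longrightarrow> emeasure (extremal_measure M v I) C = ennreal (v C)"
    "\<And>C. C \<in> I \<Longrightarrow> measure (extremal_measure M v I) C = v C"
    "finite_measure (extremal_measure M v I)"
proof -
  note Ip = Sigma_chainsD[OF I]
  note e = ext_char[OF I nd ct]
  show s: "sets (extremal_measure M v I) = sets M" using e by simp
  then show sp: "space (extremal_measure M v I) = space M" by (rule sets_eq_imp_space_eq)
  have em: "emeasure (extremal_measure M v I) C = ennreal (v C)" if "C \<in> I" for C
  proof -
    have "C \<in> chain_algebra I" using ivs_CA[OF Ip(2)] I_sub_ivs[OF Ip(3)] that by blast
    moreover have "mu_J v I C = v C" using mu_J_ivs[OF Ip(2) that Ip(3), of v] v0 by simp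
    ultimately show ?thesis using e by simp
  qed
  then show "\<And>C. C \<in> I \<Longrightarrow> emeasure (extremal_measure M v I) C = ennreal (v C)" by blast
  show "\<And>C. C \<in> I \<Longrightarrow> measure (extremal_measure M v I) C = v C"
  proof -
    fix C assume "C \<in> I"
    have "0 \<le> v C" using nd Ip(1) \<open>C \<in> I\<close> Ip(3) v0 unfolding nondecreasing_sf_def by force
    then show "measure (extremal_measure M v I) C = v C" using em[OF \<open>C \<in> I\<close>] by (simp add: measure_def)
  qed
  show "finite_measure (extremal_measure M v I)"
    by (rule finite_measureI) (use em[OF Ip(4)] sp in simp)
qed

inductive_set mcl :: "'a set set \<Rightarrow> 'a set set" for A where
  mcl_Basic: "a \<in> A \<Longrightarrow> a \<in> mcl A"
| mcl_Inc: "(\<And>i::nat. F i \<in> mcl A) \<Longrightarrow> incseq F \<Longrightarrow> (\<Union>i. F i) \<in> mcl A"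
| mcl_Dec: "(\<And>i::nat. F i \<in> mcl A) \<Longrightarrow> decseq F \<Longrightarrow> (\<Inter>i. F i) \<in> mcl A"

lemma mcl_compl:
  assumes alg: "algebra \<Omega> A"
  shows "x \<in> mcl A \<Longrightarrow> \<Omega> - x \<in> mcl A"
proof (induction rule: mcl.induct)
  case (mcl_Basic a)
  then have "\<Omega> - a \<in> A" by (rule algebra.compl_sets[OF alg])
  then show ?case by (rule mcl.mcl_Basic)
next
  case (mcl_Inc F)
  have e: "\<Omega> - (\<Union>i. F i) = (\<Inter>i. \<Omega> - F i)" by blast
  have "decseq (\<lambda>i. \<Omega> - F i)" using mcl_Inc.hyps(2) by (simp add: incseq_def decseq_def Diff_mono)
  then have "(\<Inter>i. \<Omega> - F i) \<in> mcl A" using mcl_Inc.IH by (intro mcl.mcl_Dec)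
  then show ?case by (simp only: e)
next
  case (mcl_Dec F)
  have e: "\<Omega> - (\<Inter>i. F i) = (\<Union>i. \<Omega> - F i)" by blast
  have "incseq (\<lambda>i. \<Omega> - F i)" using mcl_Dec.hyps(2) by (simp add: incseq_def decseq_def Diff_mono)
  then have "(\<Union>i. \<Omega> - F i) \<in> mcl A" using mcl_Dec.IH by (intro mcl.mcl_Inc)
  then show ?case by (simp only: e)
qed

lemma mcl_Un1:
  assumes alg: "algebra \<Omega> A" and a: "a \<in> A"
  shows "x \<in> mcl A \<Longrightarrow> a \<union> x \<in> mcl A"
proof (induction rule: mcl.induct)
  case (mcl_Basic b)
  then have "a \<union> b \<in> A" using a algebra.axioms[OF alg] ring_of_sets.Un by blast
  then show ?case by (rule mcl.mcl_Basic)
next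
  case (mcl_Inc F)
  have e: "a \<union> (\<Union>i. F i) = (\<Union>i. a \<union> F i)" by blast
  have "incseq (\<lambda>i. a \<union> F i)" using mcl_Inc.hyps(2) by (simp add: incseq_def sup.coboundedI2)
  then have "(\<Union>i. a \<union> F i) \<in> mcl A" using mcl_Inc.IH by (intro mcl.mcl_Inc)
  then show ?case by (simp only: e)
next
  case (mcl_Dec F)
  have e: "a \<union> (\<Inter>i. F i) = (\<Inter>i. a \<union> F i)" by blast
  have "decseq (\<lambda>i. a \<union> F i)" using mcl_Dec.hyps(2) by (simp add: decseq_def sup.coboundedI2)
  then have "(\<Inter>i. a \<union> F i) \<in> mcl A" using mcl_Dec.IH by (intro mcl.mcl_Dec)
  then show ?case by (simp only: e)
qed

lemma mcl_Un:
  assumes alg: "algebra \<Omega> A" and x: "x \<in> mcl A"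
  shows "y \<in> mcl A \<Longrightarrow> x \<union> y \<in> mcl A"
proof (induction rule: mcl.induct)
  case (mcl_Basic b)
  have "b \<union> x \<in> mcl A" by (rule mcl_Un1[OF alg mcl_Basic x])
  then show ?case by (simp add: Un_commute)
next
  case (mcl_Inc F)
  have e: "x \<union> (\<Union>i. F i) = (\<Union>i. x \<union> F i)" by blast
  have "incseq (\<lambda>i. x \<union> F i)" using mcl_Inc.hyps(2) by (simp add: incseq_def sup.coboundedI2)
  then have "(\<Union>i. x \<union> F i) \<in> mcl A" using mcl_Inc.IH by (intro mcl.mcl_Inc)
  then show ?case by (simp only: e)
next
  case (mcl_Dec F)
  have e: "x \<union> (\<Inter>i. F i) = (\<Inter>i. x \<union> F i)" by blast
  have "decseq (\<lambda>i. x \<union> F i)" using mcl_Dec.hyps(2) by (simp add: decseq_def sup.coboundedI2)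
  then have "(\<Inter>i. x \<union> F i) \<in> mcl A" using mcl_Dec.IH by (intro mcl.mcl_Dec)
  then show ?case by (simp only: e)
qed

lemma mcl_sigma:
  assumes alg: "algebra \<Omega> A"
  shows "sigma_sets \<Omega> A \<subseteq> mcl A"
proof
  fix x assume "x \<in> sigma_sets \<Omega> A"
  then show "x \<in> mcl A"
  proof induction
    case (Basic a) then show ?case by (rule mcl.mcl_Basic)
  next
    case Empty
    have "{} \<in> A" using algebra.axioms[OF alg] semiring_of_sets.empty_sets ring_of_sets_def by blast
    then show ?case by (rule mcl.mcl_Basic)
  next
    case (Compl a) then show ?case using mcl_compl[OF alg] by blast
  next
    case (Union F)
    define G where "G n = (\<Union>i<n. F i)" for n
    have G: "G n \<in> mcl A" for n
    proof (induction n)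
      case 0
      have "{} \<in> A" using algebra.axioms[OF alg] semiring_of_sets.empty_sets ring_of_sets_def by blast
      then show ?case unfolding G_def by (simp add: mcl.mcl_Basic)
    next
      case (Suc n)
      have "G (Suc n) = G n \<union> F n" unfolding G_def by (auto simp: lessThan_Suc)
      then show ?case using mcl_Un[OF alg Suc.IH Union.IH[of n]] by simp
    qed
    have "incseq G" unfolding G_def incseq_def
      by (intro allI impI UN_mono) auto
    then have "(\<Union>n. G n) \<in> mcl A" using G by (intro mcl.mcl_Inc)
    moreover have "(\<Union>n. G n) = (\<Union>i. F i)" unfolding G_def by auto
    ultimately show ?case by simp
  qed
qed

lemma mcl_le:
  assumes "A \<subseteq> G"
    and inc: "\<And>F. (\<And>i::nat. F i \<in> G) \<Longrightarrow> incseq F \<Longrightarrow> (\<Union>i. F i) \<in> G"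
    and dec: "\<And>F. (\<And>i::nat. F i \<in> G) \<Longrightarrow> decseq F \<Longrightarrow> (\<Inter>i. F i) \<in> G"
  shows "mcl A \<subseteq> G"
proof
  fix x assume "x \<in> mcl A" then show "x \<in> G"
  proof induction
    case (mcl_Basic a) then show ?case using assms(1) by blast
  next
    case (mcl_Inc F) then show ?case by (intro inc)
  next
    case (mcl_Dec F) then show ?case by (intro dec)
  qed
qed

definition chain_with :: "'a set set \<Rightarrow> 'a set \<Rightarrow> 'a set set" where
  "chain_with I A = {C \<inter> A | C. C \<in> I} \<union> {A \<union> C | C. C \<in> I}"

lemma sigma_chainsI:
  assumes "K \<subseteq> sets M" "is_chain K" "{} \<in> K" "space M \<in> K"
    and gen: "\<And>C. C \<in> I \<Longrightarrow> C \<in> sigma_sets (space M) K" and I: "I \<in> Sigma_chains M"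
  shows "K \<in> Sigma_chains M"
proof -
  note Ip = Sigma_chainsD[OF I]
  have "sigma_sets (space M) K \<subseteq> sets M" by (rule sets.sigma_sets_subset[OF assms(1)])
  moreover have "sigma_sets (space M) I \<subseteq> sigma_sets (space M) K"
    by (rule sigma_sets_mono) (use gen in blast)
  ultimately have "sigma_sets (space M) K = sets M" using Ip(5) by blast
  then show ?thesis using assms(1-4) unfolding Sigma_chains_def is_chain_def by blast
qed

lemma chain_with:
  assumes I: "I \<in> Sigma_chains M" and A: "A \<in> sets M"
  shows "chain_with I A \<in> Sigma_chains M" "A \<in> chain_with I A"
    "\<And>X. X \<in> I \<Longrightarrow> X \<subseteq> A \<Longrightarrow> X \<in> chain_with I A"
proof -
  note Ip = Sigma_chainsD[OF I]
  let ?K = "chain_with I A"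
  have mem: "X \<in> ?K \<longleftrightarrow> (\<exists>C\<in>I. X = C \<inter> A \<or> X = A \<union> C)" for X
    unfolding chain_with_def by blast
  have Asp: "A \<subseteq> space M" using A sets.sets_into_space by blast
  show "A \<in> ?K" using mem[of A] Ip(4) Asp by blast
  show "\<And>X. X \<in> I \<Longrightarrow> X \<subseteq> A \<Longrightarrow> X \<in> ?K"
  proof -
    fix X assume "X \<in> I" "X \<subseteq> A"
    then have "X = X \<inter> A" by blast
    then show "X \<in> ?K" using mem[of X] \<open>X \<in> I\<close> by blast
  qed
  have sub: "?K \<subseteq> sets M"
  proof
    fix X assume "X \<in> ?K"
    then obtain C where "C \<in> I" "X = C \<inter> A \<or> X = A \<union> C" using mem by blast
    moreover have "C \<in> sets M" using Ip(1) calculation(1) by blast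
    ultimately show "X \<in> sets M" using A by auto
  qed
  have ch: "is_chain ?K" unfolding is_chain_def
  proof (intro ballI)
    fix X Y assume "X \<in> ?K" "Y \<in> ?K"
    then obtain C D where CD: "C \<in> I" "X = C \<inter> A \<or> X = A \<union> C" "D \<in> I" "Y = D \<inter> A \<or> Y = A \<union> D"
      using mem by meson
    have "C \<subseteq> D \<or> D \<subseteq> C" using Ip(2) CD(1,3) unfolding is_chain_def by blast
    then show "X \<subseteq> Y \<or> Y \<subseteq> X" using CD(2,4) by blast
  qed
  have e: "{} \<in> ?K" using mem[of "{}"] Ip(3) by blast
  have s: "space M \<in> ?K" using mem[of "space M"] Ip(4) Asp by blast
  interpret S: sigma_algebra "space M" "sigma_sets (space M) ?K"
    by (rule sigma_algebra_sigma_sets) (use sub sets.sets_into_space in blast)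
  have gen: "C \<in> sigma_sets (space M) ?K" if "C \<in> I" for C
  proof -
    have "C \<inter> A \<in> ?K" "A \<union> C \<in> ?K" "A \<in> ?K" using mem that \<open>A \<in> ?K\<close> by blast+
    then have "C \<inter> A \<in> sigma_sets (space M) ?K" "A \<union> C \<in> sigma_sets (space M) ?K"
      "A \<in> sigma_sets (space M) ?K" by (auto intro: sigma_sets.Basic)
    then have "(C \<inter> A) \<union> ((A \<union> C) - A) \<in> sigma_sets (space M) ?K" by blast
    moreover have "(C \<inter> A) \<union> ((A \<union> C) - A) = C" by blast
    ultimately show ?thesis by simp
  qed
  show "?K \<in> Sigma_chains M" by (rule sigma_chainsI[OF sub ch e s gen I])
qed

lemma exists_step:
  assumes "P (0::nat)" "\<not> P j"
  shows "\<exists>n. P n \<and> \<not> P (Suc n)"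
  using assms by (induction j) auto

lemma dec_chain:
  assumes I: "I \<in> Sigma_chains M" and B: "\<And>n. B n \<in> sets M" and dB: "decseq B"
  shows "\<exists>K\<in>Sigma_chains M. (\<forall>n. B n \<in> K) \<and> (\<Inter>n. B n) \<in> K"
proof -
  note Ip = Sigma_chainsD[OF I]
  define E where "E n = (case n of 0 \<Rightarrow> space M | Suc k \<Rightarrow> B k)" for n
  define Bi where "Bi = (\<Inter>n. B n)"
  define K where "K = {Bi \<inter> C | C. C \<in> I} \<union> {E (Suc n) \<union> (E n \<inter> C) | n C. C \<in> I}"
  have mem: "X \<in> K \<longleftrightarrow> (\<exists>C\<in>I. X = Bi \<inter> C \<or> (\<exists>n. X = E (Suc n) \<union> (E n \<inter> C)))" for X
    unfolding K_def by blast
  have Bsp: "B n \<subseteq> space M" for n using B sets.sets_into_space by blast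
  have E0: "E 0 = space M" and ES: "E (Suc k) = B k" for k unfolding E_def by simp_all
  have Esets: "E n \<in> sets M" for n using B by (cases n) (simp_all add: E0 ES)
  have Estep: "E (Suc n) \<subseteq> E n" for n
    using Bsp dB by (cases n) (simp_all add: E0 ES decseq_Suc_iff)
  have Emono: "m \<le> n \<Longrightarrow> E n \<subseteq> E m" for m n
    using Estep by (rule decseq_SucI[unfolded decseq_def, rule_format])
  have BiE: "Bi \<subseteq> E n" for n
    using Bsp by (cases n) (auto simp: E0 ES Bi_def)
  have Bi_sets: "Bi \<in> sets M" unfolding Bi_def using B by auto
  have sub: "K \<subseteq> sets M"
  proof
    fix X assume "X \<in> K"
    then obtain C where C: "C \<in> I" "X = Bi \<inter> C \<or> (\<exists>n. X = E (Suc n) \<union> (E n \<inter> C))" using mem by blast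
    have "C \<in> sets M" using C(1) Ip(1) by blast
    then show "X \<in> sets M" using C(2) Bi_sets Esets by auto
  qed
  have ch: "is_chain K" unfolding is_chain_def
  proof (intro ballI)
    fix X Y assume "X \<in> K" "Y \<in> K"
    then obtain C D where CD: "C \<in> I" "X = Bi \<inter> C \<or> (\<exists>n. X = E (Suc n) \<union> (E n \<inter> C))"
      "D \<in> I" "Y = Bi \<inter> D \<or> (\<exists>n. Y = E (Suc n) \<union> (E n \<inter> D))"
      using mem by meson
    have CDc: "C \<subseteq> D \<or> D \<subseteq> C" using Ip(2) CD(1,3) unfolding is_chain_def by blast
    have lev: "E (Suc m) \<union> (E m \<inter> D') \<subseteq> E (Suc n) \<union> (E n \<inter> C')" if "n < m" for n m C' D'
    proof -
      have "E m \<subseteq> E (Suc n)" using Emono that by simp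
      then show ?thesis using Estep[of m] by blast
    qed
    have low: "Bi \<inter> C' \<subseteq> E (Suc n) \<union> (E n \<inter> D')" for n C' D'
      using BiE[of "Suc n"] by blast
    show "X \<subseteq> Y \<or> Y \<subseteq> X"
    proof (cases "X = Bi \<inter> C")
      case True
      show ?thesis
      proof (cases "Y = Bi \<inter> D")
        case True with \<open>X = Bi \<inter> C\<close> CDc show ?thesis by blast
      next
        case False
        then obtain m where "Y = E (Suc m) \<union> (E m \<inter> D)" using CD(4) by blast
        then show ?thesis using low True by blast
      qed
    next
      case False
      then obtain n where Xn: "X = E (Suc n) \<union> (E n \<inter> C)" using CD(2) by blast
      show ?thesis
      proof (cases "Y = Bi \<inter> D")
        case True then show ?thesis using low Xn by blast
      next
        case False
        then obtain m where Ym: "Y = E (Suc m) \<union> (E m \<inter> D)" using CD(4) by blast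
        consider "n < m" | "m < n" | "n = m" by linarith
        then show ?thesis
        proof cases
          case 1 then show ?thesis using lev[OF 1, of D C] Xn Ym by blast
        next
          case 2 then show ?thesis using lev[OF 2, of C D] Xn Ym by blast
        next
          case 3 then show ?thesis using Xn Ym CDc by blast
        qed
      qed
    qed
  qed
  have e: "{} \<in> K" using mem[of "{}"] Ip(3) by blast
  have "E (Suc 0) \<union> (E 0 \<inter> space M) = space M" using Bsp[of 0] by (simp add: E0 ES Un_absorb1)
  then have s: "space M \<in> K" using mem[of "space M"] Ip(4) by metis
  have EK: "E (Suc n) \<in> K" for n
  proof -
    have "E (Suc n) = E (Suc n) \<union> (E n \<inter> {})" by simp
    then show ?thesis using mem[of "E (Suc n)"] Ip(3) by blast
  qed
  interpret S: sigma_algebra "space M" "sigma_sets (space M) K"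
    by (rule sigma_algebra_sigma_sets) (use sub sets.sets_into_space in blast)
  have gen: "C \<in> sigma_sets (space M) K" if C: "C \<in> I" for C
  proof -
    have Csp: "C \<subseteq> space M" using C Ip(1) sets.sets_into_space by blast
    have p1: "Bi \<inter> C \<in> sigma_sets (space M) K" using mem[of "Bi \<inter> C"] C by (blast intro: sigma_sets.Basic)
    have p2: "(E (Suc n) \<union> (E n \<inter> C)) - E (Suc n) \<in> sigma_sets (space M) K" for n
    proof -
      have "E (Suc n) \<union> (E n \<inter> C) \<in> K" using mem C by blast
      then show ?thesis using EK[of n] by (blast intro: sigma_sets.Basic)
    qed
    then have p3: "(\<Union>n. (E (Suc n) \<union> (E n \<inter> C)) - E (Suc n)) \<in> sigma_sets (space M) K" by blast
    have "C = (Bi \<inter> C) \<union> (\<Union>n. (E (Suc n) \<union> (E n \<inter> C)) - E (Suc n))"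
    proof (intro equalityI subsetI)
      fix x assume x: "x \<in> C"
      show "x \<in> (Bi \<inter> C) \<union> (\<Union>n. (E (Suc n) \<union> (E n \<inter> C)) - E (Suc n))"
      proof (cases "x \<in> Bi")
        case True then show ?thesis using x by blast
      next
        case False
        then obtain k where "x \<notin> B k" unfolding Bi_def by blast
        then have "x \<notin> E (Suc k)" by (simp add: ES)
        moreover have "x \<in> E 0" using x Csp by (auto simp: E0)
        ultimately obtain n where "x \<in> E n" "x \<notin> E (Suc n)" using exists_step[of "\<lambda>n. x \<in> E n"] by blast
        then show ?thesis using x by blast
      qed
    next
      fix x assume "x \<in> (Bi \<inter> C) \<union> (\<Union>n. (E (Suc n) \<union> (E n \<inter> C)) - E (Suc n))"
      then show "x \<in> C" by blast
    qed
    then show ?thesis using p1 p3 by (metis S.Un)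
  qed
  have KS: "K \<in> Sigma_chains M" by (rule sigma_chainsI[OF sub ch e s gen I])
  have "B n \<in> K" for n
  proof -
    have "B n = E (Suc (Suc n)) \<union> (E (Suc n) \<inter> space M)"
      using Bsp[of n] dB by (auto simp: ES decseq_Suc_iff)
    then show ?thesis using mem[of "B n"] Ip(4) by blast
  qed
  moreover have "Bi \<in> K"
  proof -
    have "Bi = Bi \<inter> space M" using BiE[of 0] by (auto simp: E0)
    then show ?thesis using mem[of Bi] Ip(4) by blast
  qed
  ultimately show ?thesis using KS unfolding Bi_def by blast
qed

lemma finite_chain_max:
  assumes "finite S" "S \<noteq> {}" "\<And>x y. x \<in> S \<Longrightarrow> y \<in> S \<Longrightarrow> f x \<subseteq> f y \<or> f y \<subseteq> f x"
  shows "\<exists>x\<in>S. \<forall>y\<in>S. f y \<subseteq> f x"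
  using assms
proof (induction S rule: finite_ne_induct)
  case (singleton x) then show ?case by blast
next
  case (insert a F)
  then obtain x where x: "x \<in> F" "\<forall>y\<in>F. f y \<subseteq> f x" by blast
  have "f x \<subseteq> f a \<or> f a \<subseteq> f x" using insert.prems x(1) by blast
  then show ?case
  proof
    assume "f x \<subseteq> f a" then show ?thesis using x by blast
  next
    assume "f a \<subseteq> f x" then show ?thesis using x by blast
  qed
qed

lemma meas_mod:
  assumes "finite_measure N" "A \<in> sets N" "B \<in> sets N"
  shows "measure N (A \<union> B) + measure N (A \<inter> B) = measure N A + measure N B"
proof -
  have f: "emeasure N X \<noteq> \<infinity>" for X using assms(1) by (simp add: finite_measure.emeasure_finite)
  have s1: "B - A \<in> sets N" and s2: "A \<inter> B \<in> sets N" using assms(2,3) by auto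
  have e1: "measure N (A \<union> (B - A)) = measure N A + measure N (B - A)"
    by (rule measure_Union[OF f f assms(2) s1]) blast
  have e2: "measure N ((A \<inter> B) \<union> (B - A)) = measure N (A \<inter> B) + measure N (B - A)"
    by (rule measure_Union[OF f f s2 s1]) blast
  have u1: "A \<union> (B - A) = A \<union> B" and u2: "(A \<inter> B) \<union> (B - A) = B" by blast+
  show ?thesis using e1 e2 unfolding u1 u2 by linarith
qed

lemma ring_le:
  fixes v :: "'a set \<Rightarrow> real" and \<mu> :: "'a measure"
  assumes I: "I \<in> Sigma_chains M" and sub: "submodular_sf M v" and v0: "v {} = 0"
    and s\<mu>: "sets \<mu> = sets M" and fin: "finite_measure \<mu>" and mI: "\<And>C. C \<in> I \<Longrightarrow> measure \<mu> C = v C"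
  shows "finite \<C> \<Longrightarrow> \<C> \<subseteq> ivs I \<Longrightarrow> disjoint \<C> \<Longrightarrow> measure \<mu> (\<Union>\<C>) \<le> v (\<Union>\<C>)"
proof (induction "card \<C>" arbitrary: \<C> rule: less_induct)
  case less
  note Ip = Sigma_chainsD[OF I]
  have ivsM: "ivs I \<subseteq> sets M" by (rule ivs_sets[OF Ip(1)])
  have fe: "emeasure \<mu> X \<noteq> \<infinity>" for X using fin by (simp add: finite_measure.emeasure_finite)
  let ?D = "\<C> - {{}}"
  have U: "\<Union>?D = \<Union>\<C>" by blast
  show ?case
  proof (cases "?D = {}")
    case True
    then have e: "\<Union>\<C> = {}" by blast
    show ?thesis unfolding e using v0 by simp
  next
    case False
    have ex: "\<forall>X\<in>?D. \<exists>p. fst p \<in> I \<and> snd p \<in> I \<and> snd p \<subseteq> fst p \<and> X = fst p - snd p"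
    proof
      fix X assume "X \<in> ?D"
      then have "X \<in> ivs I" using less.prems(2) by blast
      then obtain A B where AB: "X = A - B" "A \<in> I" "B \<in> I" unfolding ivs_def by blast
      have "A \<inter> B \<in> I" using chain_Int[OF Ip(2) AB(2,3)] .
      moreover have "X = A - (A \<inter> B)" using AB by blast
      ultimately show "\<exists>p. fst p \<in> I \<and> snd p \<in> I \<and> snd p \<subseteq> fst p \<and> X = fst p - snd p"
        using AB by (intro exI[of _ "(A, A \<inter> B)"]) auto
    qed
    then obtain p where p: "\<forall>X\<in>?D. fst (p X) \<in> I \<and> snd (p X) \<in> I \<and> snd (p X) \<subseteq> fst (p X) \<and> X = fst (p X) - snd (p X)"
      by (rule bchoice[elim_format]) blast
    define c where "c X = fst (p X)" for X
    define d where "d X = snd (p X)" for X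
    have cd: "c X \<in> I" "d X \<in> I" "d X \<subseteq> c X" "X = c X - d X" if "X \<in> ?D" for X
      using p that unfolding c_def d_def by auto
    have finD: "finite ?D" using less.prems(1) by simp
    obtain X0 where X0: "X0 \<in> ?D" "\<forall>Y\<in>?D. c Y \<subseteq> c X0"
      using finite_chain_max[OF finD False, of c] cd(1) Ip(2) unfolding is_chain_def by blast
    have ch: "\<And>P Q. P \<in> I \<Longrightarrow> Q \<in> I \<Longrightarrow> P \<subseteq> Q \<or> Q \<subseteq> P" using Ip(2) unfolding is_chain_def by blast
    have below: "Y \<subseteq> d X0" if Y: "Y \<in> ?D - {X0}" for Y
    proof -
      have YD: "Y \<in> ?D" "Y \<noteq> X0" "Y \<noteq> {}" using Y by auto
      have dis: "Y \<inter> X0 = {}"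
        using less.prems(3) YD X0(1) unfolding pairwise_def disjnt_def by blast
      have cY: "c Y \<subseteq> c X0" using X0(2) YD(1) by blast
      have "c Y \<subseteq> d X0"
      proof (rule ccontr)
        assume nc: "\<not> c Y \<subseteq> d X0"
        have "d Y \<subseteq> d X0 \<or> d X0 \<subseteq> d Y" using ch cd(2)[OF YD(1)] cd(2)[OF X0(1)] by blast
        then show False
        proof
          assume "d Y \<subseteq> d X0"
          then obtain x where "x \<in> c Y" "x \<notin> d X0" "x \<notin> d Y" using nc by blast
          then have "x \<in> Y" "x \<in> X0" using cd(4)[OF YD(1)] cd(4)[OF X0(1)] cY by blast+
          then show False using dis by blast
        next
          assume "d X0 \<subseteq> d Y"
          obtain x where "x \<in> Y" using YD(3) by blast
          then have "x \<in> X0" using cd(4)[OF YD(1)] cd(4)[OF X0(1)] cY \<open>d X0 \<subseteq> d Y\<close> by blast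
          then show False using dis \<open>x \<in> Y\<close> by blast
        qed
      qed
      then show ?thesis using cd(4)[OF YD(1)] by blast
    qed
    define R where "R = \<Union>(?D - {X0})"
    have RX: "R \<subseteq> d X0" unfolding R_def using below by blast
    have card: "card (?D - {X0}) < card \<C>"
      using X0(1) less.prems(1) by (intro psubset_card_mono) auto
    have IH: "measure \<mu> R \<le> v R" unfolding R_def
    proof (rule less.hyps[OF card])
      show "finite (?D - {X0})" using finD by simp
      show "?D - {X0} \<subseteq> ivs I" using less.prems(2) by blast
      show "disjoint (?D - {X0})" by (rule pairwise_subset[OF less.prems(3)]) blast
    qed
    have UC: "\<Union>\<C> = X0 \<union> R" unfolding R_def using U X0(1) by blast
    have disj: "X0 \<inter> R = {}" using RX cd(4)[OF X0(1)] by blast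
    have X0s: "X0 \<in> sets M" using X0(1) less.prems(2) ivsM by blast
    have Rs: "R \<in> sets M" unfolding R_def using less.prems(1,2) ivsM
      by (intro sets.finite_Union) auto
    have cs: "c X0 \<in> sets M" "d X0 \<in> sets M" using cd(1,2)[OF X0(1)] Ip(1) by blast+
    have m1: "measure \<mu> (X0 \<union> R) = measure \<mu> X0 + measure \<mu> R"
      using measure_Union[OF fe fe] X0s Rs disj s\<mu> by simp
    have m2: "measure \<mu> X0 = v (c X0) - v (d X0)"
    proof -
      have "measure \<mu> X0 = measure \<mu> (c X0 - d X0)" using cd(4)[OF X0(1)] by simp
      also have "\<dots> = measure \<mu> (c X0) - measure \<mu> (d X0)"
        using measure_Diff[OF fe] cs cd(3)[OF X0(1)] s\<mu> by simp
      finally show ?thesis using mI cd(1,2)[OF X0(1)] by simp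
    qed
    have XR: "X0 \<union> R \<in> sets M" using X0s Rs by blast
    have "v (X0 \<union> R) + v (d X0) \<ge> v ((X0 \<union> R) \<union> d X0) + v ((X0 \<union> R) \<inter> d X0)"
      using sub[unfolded submodular_sf_def, rule_format, OF XR cs(2)] .
    moreover have "(X0 \<union> R) \<union> d X0 = c X0" using RX cd(3,4)[OF X0(1)] by blast
    moreover have "(X0 \<union> R) \<inter> d X0 = R" using RX cd(4)[OF X0(1)] by blast
    ultimately have "v (X0 \<union> R) \<ge> v (c X0) - v (d X0) + v R" by simp
    then show ?thesis using UC m1 m2 IH by simp
  qed
qed

lemma core_le:
  fixes v :: "'a set \<Rightarrow> real"
  assumes I: "I \<in> Sigma_chains M" and sub: "submodular_sf M v" and nd: "nondecreasing_sf M v"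
    and ct: "continuous_sf M v" and v0: "v {} = 0" and B: "B \<in> sets M"
  shows "measure (extremal_measure M v I) B \<le> v B"
proof -
  define \<mu> where "\<mu> = extremal_measure M v I"
  note e = ext_props[OF I nd ct v0, folded \<mu>_def]
  note Ip = Sigma_chainsD[OF I]
  interpret semiring_of_sets "space M" "ivs I" by (rule ivs_semiring[OF I])
  have spR: "space M \<in> generated_ring"
    using I_sub_ivs[OF Ip(3)] Ip(4) by (blast intro: generated_ringI_Basic)
  interpret R: ring_of_sets "space M" generated_ring by (rule generating_ring)
  have alg: "algebra (space M) generated_ring"
    by unfold_locales (rule spR)
  have sig: "sigma_sets (space M) generated_ring = sets M"
    using sigma_sets_generated_ring_eq ivs_sigma[OF I] by simp
  define G where "G = {X \<in> sets M. measure \<mu> X \<le> v X}"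
  have base: "generated_ring \<subseteq> G"
  proof
    fix X assume "X \<in> generated_ring"
    then obtain \<C> where C: "finite \<C>" "disjoint \<C>" "\<C> \<subseteq> ivs I" "X = \<Union>\<C>"
      using generated_ringE by metis
    have "X \<in> sets M" using C ivs_sets[OF Ip(1)] by (auto intro!: sets.finite_Union)
    moreover have "measure \<mu> X \<le> v X"
      using ring_le[OF I sub v0 e(1) e(5) e(4) C(1,3,2)] C(4) by simp
    ultimately show "X \<in> G" unfolding G_def by blast
  qed
  have ndv: "v X \<le> v Y" if "X \<in> sets M" "Y \<in> sets M" "X \<subseteq> Y" for X Y
    using nd that unfolding nondecreasing_sf_def by blast
  have inc: "(\<Union>i. F i) \<in> G" if F: "\<And>i::nat. F i \<in> G" "incseq F" for F
  proof -
    have Fs: "F i \<in> sets M" for i using F(1) unfolding G_def by blast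
    have Us: "(\<Union>i. F i) \<in> sets M" using Fs by blast
    have lim: "(\<lambda>i. measure \<mu> (F i)) \<longlonglongrightarrow> measure \<mu> (\<Union>i. F i)"
      using finite_measure.finite_Lim_measure_incseq[OF e(5), of F] Fs F(2) e(1) by auto
    have "measure \<mu> (F i) \<le> v (\<Union>i. F i)" for i
    proof -
      have "measure \<mu> (F i) \<le> v (F i)" using F(1) unfolding G_def by blast
      also have "\<dots> \<le> v (\<Union>i. F i)" using ndv[OF Fs Us] by blast
      finally show ?thesis .
    qed
    then have "measure \<mu> (\<Union>i. F i) \<le> v (\<Union>i. F i)" by (intro LIMSEQ_le_const2[OF lim]) auto
    then show ?thesis using Us unfolding G_def by blast
  qed
  have dec: "(\<Inter>i. F i) \<in> G" if F: "\<And>i::nat. F i \<in> G" "decseq F" for F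
  proof -
    have Fs: "F i \<in> sets M" for i using F(1) unfolding G_def by blast
    have Is: "(\<Inter>i. F i) \<in> sets M" using Fs by blast
    have lim: "(\<lambda>i. measure \<mu> (F i)) \<longlonglongrightarrow> measure \<mu> (\<Inter>i. F i)"
      using finite_measure.finite_Lim_measure_decseq[OF e(5), of F] Fs F(2) e(1) by auto
    obtain K where K: "K \<in> Sigma_chains M" "\<forall>n. F n \<in> K" "(\<Inter>n. F n) \<in> K"
      using dec_chain[OF I Fs F(2)] by blast
    note eK = ext_props[OF K(1) nd ct v0]
    have limK: "(\<lambda>i. measure (extremal_measure M v K) (F i)) \<longlonglongrightarrow> measure (extremal_measure M v K) (\<Inter>i. F i)"
      using finite_measure.finite_Lim_measure_decseq[OF eK(5), of F] Fs F(2) eK(1) by auto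
    have "(\<lambda>i. measure (extremal_measure M v K) (F i)) = (\<lambda>i. v (F i))"
      using eK(4) K(2) by auto
    moreover have "measure (extremal_measure M v K) (\<Inter>i. F i) = v (\<Inter>i. F i)"
      using eK(4) K(3) by auto
    ultimately have limv: "(\<lambda>i. v (F i)) \<longlonglongrightarrow> v (\<Inter>i. F i)" using limK by simp
    have "measure \<mu> (F i) \<le> v (F i)" for i using F(1) unfolding G_def by blast
    then have "measure \<mu> (\<Inter>i. F i) \<le> v (\<Inter>i. F i)" by (intro LIMSEQ_le[OF lim limv]) auto
    then show ?thesis using Is unfolding G_def by blast
  qed
  have "mcl generated_ring \<subseteq> G" by (rule mcl_le[OF base inc dec])
  moreover have "sets M \<subseteq> mcl generated_ring" using mcl_sigma[OF alg] sig by simp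
  ultimately have "B \<in> G" using B by blast
  then show ?thesis unfolding G_def \<mu>_def by blast
qed

lemma two_chain:
  assumes I: "I \<in> Sigma_chains M" and A: "A \<in> sets M" and B: "B \<in> sets M" and AB: "A \<subseteq> B"
  shows "\<exists>K\<in>Sigma_chains M. A \<in> K \<and> B \<in> K"
proof -
  note c1 = chain_with[OF I A]
  note c2 = chain_with[OF c1(1) B]
  show ?thesis using c2(1) c2(2) c2(3)[OF c1(2) AB] by blast
qed

lemma ext_in_core:
  fixes v :: "'a set \<Rightarrow> real"
  assumes I: "I \<in> Sigma_chains M" and sub: "submodular_sf M v" and nd: "nondecreasing_sf M v"
    and ct: "continuous_sf M v" and v0: "v {} = 0"
  shows "extremal_measure M v I \<in> lower_core M v (space M)"
proof -
  note e = ext_props[OF I nd ct v0]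
  note Ip = Sigma_chainsD[OF I]
  have "sets (restrict_space M (space M)) = sets M"
  proof (rule set_eqI)
    fix X show "X \<in> sets (restrict_space M (space M)) \<longleftrightarrow> X \<in> sets M"
      using sets.sets_into_space[of X M] by (auto simp: sets_restrict_space_iff)
  qed
  then show ?thesis unfolding lower_core_def
    using e(1,5) e(4)[OF Ip(4)] core_le[OF I sub nd ct v0] by auto
qed

lemma Pb_Pc:
  fixes v :: "'a set \<Rightarrow> real"
  assumes Pb: "\<forall>I\<in>Sigma_chains M. extremal_measure M v I \<in> lower_core M v (space M)"
    and I0: "I0 \<in> Sigma_chains M" and nd: "nondecreasing_sf M v"
    and ct: "continuous_sf M v" and v0: "v {} = 0"
  shows "\<forall>A\<in>sets M. ereal (v A) = (SUP I\<in>Sigma_chains M. ereal (measure (extremal_measure M v I) A))"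
proof
  fix A assume A: "A \<in> sets M"
  have le: "measure (extremal_measure M v I) A \<le> v A" if "I \<in> Sigma_chains M" for I
    using Pb that A sets.sets_into_space[OF A] unfolding lower_core_def by blast
  note c = chain_with[OF I0 A]
  have eq: "measure (extremal_measure M v (chain_with I0 A)) A = v A"
    using ext_props(4)[OF c(1) nd ct v0 c(2)] .
  show "ereal (v A) = (SUP I\<in>Sigma_chains M. ereal (measure (extremal_measure M v I) A))"
  proof (rule order.antisym)
    show "ereal (v A) \<le> (SUP I\<in>Sigma_chains M. ereal (measure (extremal_measure M v I) A))"
      using eq c(1) by (metis SUP_upper order_refl)
    show "(SUP I\<in>Sigma_chains M. ereal (measure (extremal_measure M v I) A)) \<le> ereal (v A)"
      using le by (intro SUP_least) simp
  qed
qed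

lemma Pc_Sub:
  fixes v :: "'a set \<Rightarrow> real"
  assumes Pc: "\<forall>A\<in>sets M. ereal (v A) = (SUP I\<in>Sigma_chains M. ereal (measure (extremal_measure M v I) A))"
    and I0: "I0 \<in> Sigma_chains M" and nd: "nondecreasing_sf M v"
    and ct: "continuous_sf M v" and v0: "v {} = 0"
  shows "submodular_sf M v"
  unfolding submodular_sf_def
proof (intro ballI)
  fix A B assume A: "A \<in> sets M" and B: "B \<in> sets M"
  obtain K where K: "K \<in> Sigma_chains M" "A \<inter> B \<in> K" "A \<union> B \<in> K"
    using two_chain[OF I0, of "A \<inter> B" "A \<union> B"] A B by blast
  define N where "N = extremal_measure M v K"
  note e = ext_props[OF K(1) nd ct v0, folded N_def]
  have le: "measure N X \<le> v X" if "X \<in> sets M" for X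
  proof -
    have "ereal (measure N X) \<le> (SUP I\<in>Sigma_chains M. ereal (measure (extremal_measure M v I) X))"
      unfolding N_def using K(1) by (rule SUP_upper)
    also have "\<dots> = ereal (v X)" using Pc that by simp
    finally show ?thesis by simp
  qed
  have "measure N (A \<union> B) + measure N (A \<inter> B) = measure N A + measure N B"
    using meas_mod[OF e(5)] A B e(1) by simp
  then show "v (A \<union> B) + v (A \<inter> B) \<le> v A + v B"
    using e(4)[OF K(2)] e(4)[OF K(3)] le[OF A] le[OF B] by simp
qed

lemma Sub_Pd:
  fixes v :: "'a set \<Rightarrow> real"
  assumes sub: "submodular_sf M v"
    and I0: "I0 \<in> Sigma_chains M" and nd: "nondecreasing_sf M v"
    and ct: "continuous_sf M v" and v0: "v {} = 0"
  shows "\<forall>A\<in>sets M. \<forall>B\<in>sets M. B \<subseteq> A \<longrightarrow>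
               ereal (v B) = (SUP N\<in>lower_core M v A. ereal (measure N B))"
proof (intro ballI impI)
  fix A B assume A: "A \<in> sets M" and B: "B \<in> sets M" and BA: "B \<subseteq> A"
  have le: "measure N B \<le> v B" if "N \<in> lower_core M v A" for N
    using that B BA unfolding lower_core_def by blast
  obtain K where K: "K \<in> Sigma_chains M" "B \<in> K" "A \<in> K"
    using two_chain[OF I0 B A BA] by blast
  define \<mu> where "\<mu> = extremal_measure M v K"
  note e = ext_props[OF K(1) nd ct v0, folded \<mu>_def]
  define N0 where "N0 = restrict_space \<mu> A"
  have Asp: "A \<inter> space \<mu> \<in> sets \<mu>" using A e(1,2) by (simp add: Int_absorb2 sets.sets_into_space)
  have mN0: "measure N0 X = measure \<mu> X" if "X \<subseteq> A" for X
    unfolding N0_def using measure_restrict_space[OF Asp that] .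
  have N0core: "N0 \<in> lower_core M v A"
    unfolding lower_core_def
  proof (intro CollectI conjI ballI impI)
    show "finite_measure N0" unfolding N0_def
      using finite_measure_restrict_space[OF e(5)] A e(1) by simp
    show "sets N0 = sets (restrict_space M A)" unfolding N0_def
      by (rule sets_restrict_space_cong[OF e(1)])
    show "measure N0 A = v A" using mN0[of A] e(4)[OF K(3)] by simp
    fix X assume "X \<in> sets M" "X \<subseteq> A"
    then show "measure N0 X \<le> v X" using mN0 core_le[OF K(1) sub nd ct v0] unfolding \<mu>_def by simp
  qed
  have eqB: "measure N0 B = v B" using mN0[OF BA] e(4)[OF K(2)] by simp
  show "ereal (v B) = (SUP N\<in>lower_core M v A. ereal (measure N B))"
  proof (rule order.antisym)
    show "ereal (v B) \<le> (SUP N\<in>lower_core M v A. ereal (measure N B))"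
      using eqB N0core by (metis SUP_upper)
    show "(SUP N\<in>lower_core M v A. ereal (measure N B)) \<le> ereal (v B)"
      using le by (intro SUP_least) simp
  qed
qed

lemma Pd_Sub:
  fixes v :: "'a set \<Rightarrow> real"
  assumes Pd: "\<forall>A\<in>sets M. \<forall>B\<in>sets M. B \<subseteq> A \<longrightarrow>
               ereal (v B) = (SUP N\<in>lower_core M v A. ereal (measure N B))"
  shows "submodular_sf M v"
  unfolding submodular_sf_def
proof (intro ballI)
  fix A B assume A: "A \<in> sets M" and B: "B \<in> sets M"
  define X where "X = A \<union> B"
  have X: "X \<in> sets M" unfolding X_def using A B by blast
  have AB: "A \<inter> B \<in> sets M" using A B by blast
  have bound: "measure N (A \<inter> B) \<le> v A + v B - v X" if N: "N \<in> lower_core M v X" for N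
  proof -
    have N1: "finite_measure N" "sets N = sets (restrict_space M X)" "measure N X = v X"
      "\<And>Y. Y \<in> sets M \<Longrightarrow> Y \<subseteq> X \<Longrightarrow> measure N Y \<le> v Y"
      using N unfolding lower_core_def by auto
    have Xsp: "X \<inter> space M \<in> sets M" using X by (simp add: Int_absorb2 sets.sets_into_space)
    have AN: "A \<in> sets N" "B \<in> sets N" using N1(2) A B Xsp unfolding X_def
      by (auto simp: sets_restrict_space_iff)
    have "measure N (A \<union> B) + measure N (A \<inter> B) = measure N A + measure N B"
      by (rule meas_mod[OF N1(1) AN])
    moreover have "measure N A \<le> v A" "measure N B \<le> v B" using N1(4) A B unfolding X_def by auto
    ultimately show ?thesis using N1(3) unfolding X_def by simp
  qed
  have ABX: "A \<inter> B \<subseteq> X" unfolding X_def by blast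
  have "ereal (v (A \<inter> B)) = (SUP N\<in>lower_core M v X. ereal (measure N (A \<inter> B)))"
    using Pd[rule_format, OF X AB ABX] .
  also have "\<dots> \<le> ereal (v A + v B - v X)"
    using bound by (intro SUP_least) simp
  finally show "v (A \<union> B) + v (A \<inter> B) \<le> v A + v B" unfolding X_def by simp
qed

theorem theorem7:
  fixes M :: "'a measure" and v :: "'a set \<Rightarrow> real"
  assumes "Sigma_chains M \<noteq> {}"
    and "nondecreasing_sf M v"
    and "continuous_sf M v"
    and "v {} = 0"
  shows "(submodular_sf M v \<longleftrightarrow>
            (\<forall>I\<in>Sigma_chains M. extremal_measure M v I \<in> lower_core M v (space M)))
       \<and> (submodular_sf M v \<longleftrightarrow>
            (\<forall>A\<in>sets M. ereal (v A) = (SUP I\<in>Sigma_chains M. ereal (measure (extremal_measure M v I) A))))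
       \<and> (submodular_sf M v \<longleftrightarrow>
            (\<forall>A\<in>sets M. \<forall>B\<in>sets M. B \<subseteq> A \<longrightarrow>
               ereal (v B) = (SUP N\<in>lower_core M v A. ereal (measure N B))))"
proof -
  obtain I0 where I0: "I0 \<in> Sigma_chains M" using assms(1) by blast
  note nd = assms(2) and ct = assms(3) and v0 = assms(4)
  let ?S = "submodular_sf M v"
  let ?B = "\<forall>I\<in>Sigma_chains M. extremal_measure M v I \<in> lower_core M v (space M)"
  let ?C = "\<forall>A\<in>sets M. ereal (v A) = (SUP I\<in>Sigma_chains M. ereal (measure (extremal_measure M v I) A))"
  let ?D = "\<forall>A\<in>sets M. \<forall>B\<in>sets M. B \<subseteq> A \<longrightarrow>
               ereal (v B) = (SUP N\<in>lower_core M v A. ereal (measure N B))"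
  have ab: "?B" if "?S"
  proof
    fix I assume "I \<in> Sigma_chains M"
    then show "extremal_measure M v I \<in> lower_core M v (space M)" by (rule ext_in_core[OF _ that nd ct v0])
  qed
  have bc: "?C" if "?B" using Pb_Pc[OF that I0 nd ct v0] .
  have ca: "?S" if "?C" using Pc_Sub[OF that I0 nd ct v0] .
  have ad: "?D" if "?S" using Sub_Pd[OF that I0 nd ct v0] .
  have da: "?S" if "?D" using Pd_Sub[OF that] .
  have 1: "?S \<longleftrightarrow> ?B"
  proof
    assume "?S" then show "?B" by (rule ab)
  next
    assume "?B" then show "?S" by (intro ca bc)
  qed
  have 2: "?S \<longleftrightarrow> ?C"
  proof
    assume "?S" then show "?C" by (intro bc ab)
  next
    assume "?C" then show "?S" by (rule ca)
  qed
  have 3: "?S \<longleftrightarrow> ?D"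
  proof
    assume "?S" then show "?D" by (rule ad)
  next
    assume "?D" then show "?S" by (rule da)
  qed
  show ?thesis using 1 2 3 by (intro conjI)
qed

end
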